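(* Let $N\ge 1$ and $0\le k\le N$ be integers (e.g. $k=\lfloor N/E\rfloor$ for an integer $E\ge1$). Let $F_k$ be the top-$k$ selection rule: for $r_{1:N}\in\mathbb{R}^N$, $F_k(r_{1:N})$ is a set of $k$ indices $t\in[N]$ with the $k$ largest values $r_t$ (ties broken by any fixed deterministic rule, e.g. by index). Then every finite-range advice that causalizes $F_k$ has range of size at least $\binom{N}{k}$; that is, $\mathcal{L}_{F_k}([1\!:\!N])\ge\log_2\binom{N}{k}$.
   Context: Let $[N]=\{1,\dots,N\}$. A deterministic selection rule is a map $F$ from logit sequences $r_{1:N}=(r_1,\dots,r_N)\in\mathbb{R}^N$ to subsets $F(r_{1:N})\subseteq[N]$; write $z_t=\mathbf{1}[t\in F(r_{1:N})]$. An advice variable is $A=\alpha(r_{1:N})$ where $\alpha$ (the encoder) is any function of the whole sequence with finite range $\mathrm{Range}(\alpha)=\{\alpha(r_{1:N}): r_{1:N}\in\mathbb{R}^N\}$. $A$ causalizes $F$ if there exist functions $g_1,\dots,g_N$ such that $z_t=g_t(r_{1:t},\alpha(r_{1:N}))$ for all $r_{1:N}\in\mathbb{R}^N$ and all $t\in[N]$. The future information leakage of $F$ on length $N$ is $\mathcal{L}_F([1\!:\!N])=\min_{\alpha,\{g_t\}}\log_2|\mathrm{Range}(\alpha)|$, the minimum over all finite-range encoders $\alpha$ and functions $g_t$ such that $\alpha$ causalizes $F$. *)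

theory Defs
  imports Complex_Main
begin

text \<open>A logit sequence r_{1:N} is a real list of length N; r_t is r ! (t - 1), for t in {1..N}.
  A selection rule maps such lists to subsets of {1..N}.\<close>

definition is_topk_rule :: "nat \<Rightarrow> nat \<Rightarrow> (real list \<Rightarrow> nat set) \<Rightarrow> bool" where
  "is_topk_rule N k F \<longleftrightarrow>
     (\<forall>r. length r = N \<longrightarrow>
        F r \<subseteq> {1..N} \<and> card (F r) = k \<and>
        (\<forall>i\<in>F r. \<forall>j\<in>{1..N} - F r. r ! (j - 1) \<le> r ! (i - 1)))"

definition causalizes :: "nat \<Rightarrow> (real list \<Rightarrow> nat set) \<Rightarrow> (real list \<Rightarrow> 'a)
    \<Rightarrow> (nat \<Rightarrow> real list \<Rightarrow> 'a \<Rightarrow> bool) \<Rightarrow> bool" where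
  "causalizes N F \<alpha> g \<longleftrightarrow>
     (\<forall>r. length r = N \<longrightarrow> (\<forall>t\<in>{1..N}. (t \<in> F r) = g t (take t r) (\<alpha> r)))"

definition advice_range :: "nat \<Rightarrow> (real list \<Rightarrow> 'a) \<Rightarrow> 'a set" where
  "advice_range N \<alpha> = \<alpha> ` {r. length r = N}"

text \<open>Future information leakage; advice values are encoded as naturals (w.l.o.g. for finite ranges).\<close>

definition leakage :: "nat \<Rightarrow> (real list \<Rightarrow> nat set) \<Rightarrow> real" where
  "leakage N F = Inf {log 2 (real (card (advice_range N \<alpha>))) | \<alpha> g.
      finite (advice_range N (\<alpha> :: real list \<Rightarrow> nat)) \<and> causalizes N F \<alpha> g}"

end

theory Submission
  imports Defs "HOL-Library.Nat_Bijection"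
begin

definition sg :: "nat set \<Rightarrow> nat \<Rightarrow> real" where
  "sg S s = (if s \<in> S then -1 else 1)"

definition val :: "nat set \<Rightarrow> nat \<Rightarrow> real" where
  "val S t = (\<Sum>s\<in>{1..<t}. sg S s * (1/2)^s)"

definition sq :: "nat \<Rightarrow> nat set \<Rightarrow> real list" where
  "sq N S = map (val S) [1..<N+1]"

lemma geo: "a < b \<Longrightarrow> (\<Sum>s\<in>{a<..<b}. (1/2::real)^s) = (1/2)^a - (1/2)^(b-1)"
proof (induction b)
  case 0 then show ?case by simp
next
  case (Suc b)
  show ?case
  proof (cases "a < b")
    case True
    have "{a<..<Suc b} = insert b {a<..<b}" using True by auto
    then have "(\<Sum>s\<in>{a<..<Suc b}. (1/2::real)^s) = (1/2)^b + (\<Sum>s\<in>{a<..<b}. (1/2::real)^s)"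
      by simp
    also have "\<dots> = (1/2)^a - (1/2)^b"
    proof -
      have IH: "(\<Sum>s\<in>{a<..<b}. (1/2::real)^s) = (1/2)^a - (1/2)^(b-1)" using Suc.IH True .
      have "(1/2::real)^(b-1) = 2 * (1/2)^b" using True by (cases b) auto
      then show ?thesis using IH by simp
    qed
    finally show ?thesis by simp
  next
    case False
    then have "b = a" using Suc by simp
    moreover have "{a<..<Suc a} = {}" by auto
    ultimately show ?thesis by simp
  qed
qed

lemma tail_bound: "a < b \<Longrightarrow> (\<Sum>s\<in>{a<..<b}. (1/2::real)^s) < (1/2)^a"
  using geo[of a b] by simp

lemma diff_val: "j \<le> i \<Longrightarrow> 1 \<le> j \<Longrightarrow> val S i - val S j = (\<Sum>s\<in>{j..<i}. sg S s * (1/2)^s)"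
proof -
  assume a: "j \<le> i" "1 \<le> j"
  have "{1..<i} = {1..<j} \<union> {j..<i}" using a by auto
  then have "val S i = val S j + (\<Sum>s\<in>{j..<i}. sg S s * (1/2)^s)"
    unfolding val_def by (subst sum.union_disjoint[symmetric]) auto
  then show ?thesis by simp
qed

lemma sum_lower: "(\<Sum>s\<in>A. sg S s * (1/2::real)^s) \<ge> - (\<Sum>s\<in>A. (1/2)^s)"
proof -
  have "(\<Sum>s\<in>A. - ((1/2::real)^s)) \<le> (\<Sum>s\<in>A. sg S s * (1/2)^s)"
    by (rule sum_mono) (auto simp: sg_def)
  then show ?thesis by (simp add: sum_negf)
qed

lemma sum_upper: "(\<Sum>s\<in>A. sg S s * (1/2::real)^s) \<le> (\<Sum>s\<in>A. (1/2)^s)"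
  by (rule sum_mono) (auto simp: sg_def)

lemma val_sep:
  assumes "i \<in> S" "j \<notin> S" "1 \<le> i" "1 \<le> j"
  shows "val S j < val S i"
proof (cases "j < i")
  case True
  have "{j..<i} = insert j {j<..<i}" using True by auto
  then have "val S i - val S j = sg S j * (1/2)^j + (\<Sum>s\<in>{j<..<i}. sg S s * (1/2)^s)"
    using diff_val[of j i S] True assms by simp
  also have "\<dots> \<ge> (1/2)^j - (\<Sum>s\<in>{j<..<i}. (1/2)^s)"
    using sum_lower[where S=S and A="{j<..<i}"] assms by (simp add: sg_def)
  finally have "val S i - val S j \<ge> (1/2)^j - (\<Sum>s\<in>{j<..<i}. (1/2)^s)" .
  moreover have "(\<Sum>s\<in>{j<..<i}. (1/2::real)^s) < (1/2)^j" using tail_bound True by blast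
  ultimately show ?thesis by linarith
next
  case False
  then have ij: "i < j" using assms by (cases "i = j") auto
  have "{i..<j} = insert i {i<..<j}" using ij by auto
  then have "val S j - val S i = sg S i * (1/2)^i + (\<Sum>s\<in>{i<..<j}. sg S s * (1/2)^s)"
    using diff_val[of i j S] ij assms by simp
  also have "\<dots> \<le> (\<Sum>s\<in>{i<..<j}. (1/2)^s) - (1/2)^i"
    using sum_upper[where S=S and A="{i<..<j}"] assms by (simp add: sg_def)
  finally have "val S j - val S i \<le> (\<Sum>s\<in>{i<..<j}. (1/2)^s) - (1/2)^i" .
  moreover have "(\<Sum>s\<in>{i<..<j}. (1/2::real)^s) < (1/2)^i" using tail_bound ij by blast
  ultimately show ?thesis by linarith
qed

lemma sq_len: "length (sq N S) = N" by (simp add: sq_def)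

lemma sq_nth: "1 \<le> t \<Longrightarrow> t \<le> N \<Longrightarrow> sq N S ! (t - 1) = val S t"
  proof -
  assume a: "1 \<le> t" "t \<le> N"
  then have "t - 1 < length [1..<N+1]" by simp
  then have "map (val S) [1..<N+1] ! (t - 1) = val S ([1..<N+1] ! (t - 1))" by (rule nth_map)
  also have "[1..<N+1] ! (t - 1) = 1 + (t - 1)" using a by (intro nth_upt) simp
  also have "1 + (t - 1) = t" using a by simp
  finally show ?thesis by (simp add: sq_def)
qed

lemma F_sq:
  assumes top: "is_topk_rule N k F" and S: "S \<subseteq> {1..N}" "card S = k"
  shows "F (sq N S) = S"
proof (rule ccontr)
  assume ne: "F (sq N S) \<noteq> S"
  have P0: "F (sq N S) \<subseteq> {1..N} \<and> card (F (sq N S)) = k \<and>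
    (\<forall>i\<in>F (sq N S). \<forall>j\<in>{1..N} - F (sq N S). sq N S ! (j - 1) \<le> sq N S ! (i - 1))"
    using top sq_len[of N S] unfolding is_topk_rule_def by (elim allE impE)
  note P = P0[THEN conjunct1] P0[THEN conjunct2, THEN conjunct1] P0[THEN conjunct2, THEN conjunct2]
  have fin: "finite S" "finite (F (sq N S))"
    using finite_subset[OF S(1)] finite_subset[OF P(1)] by simp_all
  have "\<not> F (sq N S) \<subseteq> S"
  proof
    assume "F (sq N S) \<subseteq> S"
    then show False using card_subset_eq[OF fin(1)] P(2) S(2) ne by simp
  qed
  then obtain i where i: "i \<in> F (sq N S)" "i \<notin> S" by blast
  have "\<not> S \<subseteq> F (sq N S)"
  proof
    assume "S \<subseteq> F (sq N S)"
    then have "S = F (sq N S)" using card_subset_eq[OF fin(2)] P(2) S(2) by simp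
    then show False using ne by simp
  qed
  then obtain j where j: "j \<in> S" "j \<notin> F (sq N S)" by blast
  have ir: "1 \<le> i" "i \<le> N" using i P(1) by auto
  have jr: "1 \<le> j" "j \<le> N" using j S(1) by auto
  have jm: "j \<in> {1..N} - F (sq N S)" using j jr by simp
  have "sq N S ! (j - 1) \<le> sq N S ! (i - 1)" using bspec[OF bspec[OF P(3) i(1)] jm] .
  then have "val S j \<le> val S i" using sq_nth ir jr by simp
  moreover have "val S i < val S j" using val_sep[of j S i] i j ir jr by simp
  ultimately show False by simp
qed

lemma take_sq:
  assumes "S \<inter> {1..<t} = T \<inter> {1..<t}" "t \<le> N"
  shows "take t (sq N S) = take t (sq N T)"
proof (rule nth_equalityI)
  show "length (take t (sq N S)) = length (take t (sq N T))" by (simp add: sq_len)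
next
  fix u assume "u < length (take t (sq N S))"
  then have u: "u < t" "t \<le> N" using assms by (auto simp: sq_len)
  have "val S (Suc u) = val T (Suc u)"
    unfolding val_def
  proof (rule sum.cong)
    fix s assume "s \<in> {1..<Suc u}"
    then have "s \<in> {1..<t}" using u by auto
    then have "(s \<in> S) = (s \<in> T)" using assms(1) by blast
    then show "sg S s * (1/2)^s = sg T s * (1/2)^s" by (simp add: sg_def)
  qed simp
  then show "take t (sq N S) ! u = take t (sq N T) ! u"
    using u sq_nth[of "Suc u" N] by simp
qed

lemma main_bound:
  fixes \<alpha> :: "real list \<Rightarrow> 'a"
  assumes top: "is_topk_rule N k F" and fin: "finite (advice_range N \<alpha>)"
    and c: "causalizes N F \<alpha> g"
  shows "N choose k \<le> card (advice_range N \<alpha>)"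
proof -
  let ?K = "{S. S \<subseteq> {1..N} \<and> card S = k}"
  have inj: "inj_on (\<lambda>S. \<alpha> (sq N S)) ?K"
  proof (rule inj_onI, rule ccontr)
    fix S T assume S: "S \<in> ?K" and T: "T \<in> ?K" and eq: "\<alpha> (sq N S) = \<alpha> (sq N T)"
      and ne: "S \<noteq> T"
    let ?D = "(S - T) \<union> (T - S)"
    have fS: "finite S" using S finite_subset[of S "{1..N}"] by auto
    have fT: "finite T" using T finite_subset[of T "{1..N}"] by auto
    have Dfin: "finite ?D" using fS fT by simp
    have Dne: "?D \<noteq> {}" using ne by blast
    define t where "t = Min ?D"
    have tD: "t \<in> ?D" using Min_in[OF Dfin Dne] t_def by simp
    have tmin: "\<And>s. s \<in> ?D \<Longrightarrow> t \<le> s" using Min_le[OF Dfin] t_def by simp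
    have tr: "1 \<le> t" "t \<le> N" using tD S T by auto
    have agree: "S \<inter> {1..<t} = T \<inter> {1..<t}"
    proof -
      have "(s \<in> S) = (s \<in> T)" if st: "s < t" for s
      proof -
        have "s \<notin> ?D" using tmin[of s] st by linarith
        then show ?thesis by blast
      qed
      then show ?thesis by auto
    qed
    have tk: "take t (sq N S) = take t (sq N T)" using take_sq[OF agree tr(2)] .
    have FS: "F (sq N S) = S" using F_sq[OF top] S by blast
    have FT: "F (sq N T) = T" using F_sq[OF top] T by blast
    have cS: "(t \<in> S) = g t (take t (sq N S)) (\<alpha> (sq N S))"
    proof -
      have "\<forall>t\<in>{1..N}. (t \<in> F (sq N S)) = g t (take t (sq N S)) (\<alpha> (sq N S))"
        using c sq_len[of N S] unfolding causalizes_def by blast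
      then show ?thesis using tr FS by simp
    qed
    have cT: "(t \<in> T) = g t (take t (sq N T)) (\<alpha> (sq N T))"
    proof -
      have "\<forall>t\<in>{1..N}. (t \<in> F (sq N T)) = g t (take t (sq N T)) (\<alpha> (sq N T))"
        using c sq_len[of N T] unfolding causalizes_def by blast
      then show ?thesis using tr FT by simp
    qed
    have "(t \<in> S) = (t \<in> T)" using cS cT tk eq by simp
    then show False using tD by blast
  qed
  have sub: "(\<lambda>S. \<alpha> (sq N S)) ` ?K \<subseteq> advice_range N \<alpha>"
    unfolding advice_range_def using sq_len by auto
  have "N choose k = card ?K" using n_subsets[of "{1..N}" k] by simp
  also have "\<dots> = card ((\<lambda>S. \<alpha> (sq N S)) ` ?K)" using card_image[OF inj] by simp
  also have "\<dots> \<le> card (advice_range N \<alpha>)" using card_mono[OF fin sub] .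
  finally show ?thesis .
qed

theorem theoremA1:
  fixes N k :: nat and F :: "real list \<Rightarrow> nat set"
  assumes "N \<ge> 1" and "k \<le> N" and "is_topk_rule N k F"
  shows "(\<forall>(\<alpha> :: real list \<Rightarrow> 'a) g. finite (advice_range N \<alpha>) \<and> causalizes N F \<alpha> g
            \<longrightarrow> real (N choose k) \<le> real (card (advice_range N \<alpha>)))
       \<and> leakage N F \<ge> log 2 (real (N choose k))"
proof
  show "\<forall>(\<alpha> :: real list \<Rightarrow> 'a) g. finite (advice_range N \<alpha>) \<and> causalizes N F \<alpha> g
            \<longrightarrow> real (N choose k) \<le> real (card (advice_range N \<alpha>))"
    using main_bound[OF assms(3)] by auto
next
  let ?X = "{log 2 (real (card (advice_range N \<alpha>))) | \<alpha> g.
      finite (advice_range N (\<alpha> :: real list \<Rightarrow> nat)) \<and> causalizes N F \<alpha> g}"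
  have pos: "0 < real (N choose k)" using assms(2) by simp
  define a0 :: "real list \<Rightarrow> nat" where "a0 = (\<lambda>r. set_encode (F r))"
  define g0 :: "nat \<Rightarrow> real list \<Rightarrow> nat \<Rightarrow> bool" where "g0 = (\<lambda>t p a. t \<in> set_decode a)"
  have Fsub: "\<And>r. length r = N \<Longrightarrow> F r \<subseteq> {1..N}" using assms(3) unfolding is_topk_rule_def by blast
  have fin0: "finite (advice_range N a0)"
  proof -
    have "advice_range N a0 \<subseteq> set_encode ` Pow {1..N}"
      unfolding advice_range_def a0_def using Fsub by blast
    then show ?thesis using finite_subset by blast
  qed
  have c0: "causalizes N F a0 g0"
    unfolding causalizes_def a0_def g0_def
  proof (intro allI impI ballI)
    fix r t assume "length (r::real list) = N"
    then have "finite (F r)" using Fsub finite_subset by blast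
    then show "(t \<in> F r) = (t \<in> set_decode (set_encode (F r)))" by (simp add: set_encode_inverse)
  qed
  have ne: "?X \<noteq> {}" using fin0 c0 by blast
  show "leakage N F \<ge> log 2 (real (N choose k))"
    unfolding leakage_def
  proof (rule cInf_greatest[OF ne])
    fix x assume "x \<in> ?X"
    then obtain \<alpha> :: "real list \<Rightarrow> nat" and g where x: "x = log 2 (real (card (advice_range N \<alpha>)))"
      and h: "finite (advice_range N \<alpha>)" "causalizes N F \<alpha> g" by blast
    have "real (N choose k) \<le> real (card (advice_range N \<alpha>))"
      using main_bound[OF assms(3) h] by simp
    note ab = this
    have cpos: "0 < real (card (advice_range N \<alpha>))" using ab pos by linarith
    have "log 2 (real (N choose k)) \<le> log 2 (real (card (advice_range N \<alpha>)))"
      by (subst log_le_cancel_iff[OF _ pos cpos]) (use ab in auto)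
    then show "log 2 (real (N choose k)) \<le> x" using x by simp
  qed
qed

end
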